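(* For every integer $n\ge 1$, let $M(n)$ denote the maximum modulus of an independence root over all (simple) graphs on $n$ vertices. Then $$M(n)\ge \begin{cases} 3^{\frac{n-3}{3}} & \text{if } n\equiv 0 \pmod 3,\\ 3^{\frac{n-1}{3}} & \text{if } n\equiv 1 \pmod 3,\\ 3^{\frac{n-2}{3}} & \text{if } n\equiv 2 \pmod 3.\end{cases}$$
   Context: For a finite simple graph $G$, the independence polynomial is $i(G,x)=\sum_{k=0}^{\alpha(G)} i_k x^k$, where $i_k$ is the number of independent sets of size $k$ in $G$ (with $i_0=1$) and $\alpha(G)$ is the independence number (maximum size of an independent set). Its roots in $\mathbb{C}$ are the independence roots of $G$. *)

theory Defs
  imports "HOL-Computational_Algebra.Polynomial" Complex_Main
begin

text \<open>A finite simple graph with vertex set V: a finite vertex set together with a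
  symmetric, irreflexive adjacency relation E (only its restriction to V matters).\<close>
definition simple_graph :: "'a set \<Rightarrow> ('a \<Rightarrow> 'a \<Rightarrow> bool) \<Rightarrow> bool" where
  "simple_graph V E \<longleftrightarrow> finite V \<and> (\<forall>u\<in>V. \<forall>v\<in>V. E u v \<longrightarrow> E v u) \<and> (\<forall>v\<in>V. \<not> E v v)"

definition indep_set :: "'a set \<Rightarrow> ('a \<Rightarrow> 'a \<Rightarrow> bool) \<Rightarrow> 'a set \<Rightarrow> bool" where
  "indep_set V E S \<longleftrightarrow> S \<subseteq> V \<and> (\<forall>u\<in>S. \<forall>v\<in>S. \<not> E u v)"

definition indep_number :: "'a set \<Rightarrow> ('a \<Rightarrow> 'a \<Rightarrow> bool) \<Rightarrow> nat" where
  "indep_number V E = Max (card ` {S. indep_set V E S})"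

definition indep_count :: "'a set \<Rightarrow> ('a \<Rightarrow> 'a \<Rightarrow> bool) \<Rightarrow> nat \<Rightarrow> nat" where
  "indep_count V E k = card {S. indep_set V E S \<and> card S = k}"

definition indep_poly :: "'a set \<Rightarrow> ('a \<Rightarrow> 'a \<Rightarrow> bool) \<Rightarrow> complex poly" where
  "indep_poly V E = (\<Sum>k\<le>indep_number V E. monom (of_nat (indep_count V E k)) k)"

text \<open>M(n): maximum modulus of an independence root over all simple graphs on n vertices
  (vertex set {0..<n} without loss of generality).\<close>
definition max_indep_root_modulus :: "nat \<Rightarrow> real" where
  "max_indep_root_modulus n =
     Max {norm z | z E. simple_graph {..<n} E \<and> poly (indep_poly {..<n} E) z = 0}"

end

theory Submission imports Defs begin

definition FF :: "('a \<Rightarrow> 'a \<Rightarrow> bool) \<Rightarrow> 'a set \<Rightarrow> complex \<Rightarrow> complex" where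
  "FF E V z = (\<Sum>S\<in>{S. indep_set V E S}. z ^ card S)"

lemma indep_fin: "finite V \<Longrightarrow> finite {S. indep_set V E S}"
  by (rule finite_subset[of _ "Pow V"]) (auto simp: indep_set_def)

definition GG :: "'a set set \<Rightarrow> complex poly" where
  "GG I = (\<Sum>k\<le>Max (card ` I). monom (of_nat (card {S\<in>I. card S = k})) k)"

lemma indep_poly_GG: "indep_poly V E = GG {S. indep_set V E S}"
  unfolding indep_poly_def GG_def indep_number_def indep_count_def by simp

lemma poly_indep: assumes "finite V" shows "poly (indep_poly V E) z = FF E V z"
proof -
  let ?I = "{S. indep_set V E S}"
  have fI: "finite ?I" using indep_fin[OF assms] .
  have e: "{} \<in> ?I" by (simp add: indep_set_def)
  have sub: "card ` ?I \<subseteq> {..Max (card ` ?I)}" using fI by auto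
  have "poly (indep_poly V E) z = (\<Sum>k\<le>Max (card ` ?I). of_nat (card {S\<in>?I. card S = k}) * z ^ k)"
    unfolding indep_poly_GG GG_def by (simp add: poly_sum poly_monom)
  also have "\<dots> = (\<Sum>k\<le>Max (card ` ?I). (\<Sum>S\<in>{S\<in>?I. card S = k}. z ^ card S))"
    by (rule sum.cong) auto
  also have "\<dots> = (\<Sum>S\<in>?I. z ^ card S)"
    by (rule sum.group[OF fI _ sub]) simp
  finally show ?thesis unfolding FF_def .
qed

lemma FF_rec:
  assumes "finite V" "v \<in> V" "\<not> E v v"
  shows "FF E V z = FF E (V - {v}) z + z * FF E {u\<in>V. u \<noteq> v \<and> \<not> E u v \<and> \<not> E v u} z"
proof -
  let ?W = "{u\<in>V. u \<noteq> v \<and> \<not> E u v \<and> \<not> E v u}"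
  have split: "{S. indep_set V E S} = {S. indep_set (V - {v}) E S} \<union> insert v ` {S. indep_set ?W E S}"
  proof (rule set_eqI, rule iffI)
    fix S assume "S \<in> {S. indep_set V E S}"
    hence S: "indep_set V E S" by simp
    show "S \<in> {S. indep_set (V - {v}) E S} \<union> insert v ` {S. indep_set ?W E S}"
    proof (cases "v \<in> S")
      case True
      have "indep_set ?W E (S - {v})" using S True by (auto simp: indep_set_def)
      moreover have "S = insert v (S - {v})" using True by auto
      ultimately show ?thesis by blast
    next
      case False thus ?thesis using S by (auto simp: indep_set_def)
    qed
  next
    fix S assume "S \<in> {S. indep_set (V - {v}) E S} \<union> insert v ` {S. indep_set ?W E S}"
    thus "S \<in> {S. indep_set V E S}" using assms by (auto simp: indep_set_def)
  qed
  have fW: "finite ?W" using assms by simp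
  have disj: "{S. indep_set (V - {v}) E S} \<inter> insert v ` {S. indep_set ?W E S} = {}"
    by (auto simp: indep_set_def)
  have inj: "inj_on (insert v) {S. indep_set ?W E S}"
    unfolding inj_on_def indep_set_def by blast
  have "FF E V z = (\<Sum>S\<in>{S. indep_set (V - {v}) E S}. z ^ card S) + (\<Sum>S\<in>insert v ` {S. indep_set ?W E S}. z ^ card S)"
    unfolding FF_def split
    by (rule sum.union_disjoint) (use assms indep_fin[OF fW] disj in \<open>auto intro: indep_fin\<close>)
  also have "(\<Sum>S\<in>insert v ` {S. indep_set ?W E S}. z ^ card S) = (\<Sum>S\<in>{S. indep_set ?W E S}. z ^ card (insert v S))"
    by (rule sum.reindex[OF inj, unfolded comp_def])
  also have "\<dots> = (\<Sum>S\<in>{S. indep_set ?W E S}. z * z ^ card S)"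
  proof (rule sum.cong[OF refl])
    fix S assume "S \<in> {S. indep_set ?W E S}"
    hence "finite S" "v \<notin> S" using fW by (auto simp: indep_set_def intro: finite_subset)
    thus "z ^ card (insert v S) = z * z ^ card S" by simp
  qed
  finally show ?thesis unfolding FF_def by (simp add: sum_distrib_left)
qed

lemma FF_zero: assumes "finite V" shows "FF E V 0 = 1"
proof -
  have "FF E V 0 = (\<Sum>S\<in>{S. indep_set V E S}. if S = {} then 1 else 0)"
    unfolding FF_def
  proof (rule sum.cong[OF refl])
    fix S assume "S \<in> {S. indep_set V E S}"
    hence "finite S" using assms by (auto simp: indep_set_def intro: finite_subset)
    thus "(0::complex) ^ card S = (if S = {} then 1 else 0)" by (simp add: card_gt_0_iff)
  qed
  also have "\<dots> = 1" using indep_fin[OF assms, of E] by (simp add: sum.delta' indep_set_def)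
  finally show ?thesis .
qed

lemma FF_noedge: "finite W \<Longrightarrow> (\<forall>u\<in>W. \<forall>v\<in>W. \<not> E u v) \<Longrightarrow> FF E W z = (1 + z) ^ card W"
proof (induction W rule: finite_induct)
  case empty
  have "{S. indep_set {} E S} = {{}}" by (auto simp: indep_set_def)
  thus ?case by (simp add: FF_def)
next
  case (insert w W)
  have "FF E (insert w W) z = FF E W z + z * FF E W z"
  proof -
    have a: "insert w W - {w} = W" using insert by auto
    have b: "{u\<in>insert w W. u \<noteq> w \<and> \<not> E u w \<and> \<not> E w u} = W" using insert by auto
    show ?thesis using FF_rec[of "insert w W" w E z] insert unfolding a b by auto
  qed
  thus ?case using insert by (simp add: algebra_simps)
qed


lemma div3_eq: "((u::nat) div 3 = j) = (3*j \<le> u \<and> u < 3*j + 3)"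
proof -
  have "u = 3*(u div 3) + u mod 3" "u mod 3 < 3" by auto
  thus ?thesis by linarith
qed

definition gE :: "nat \<Rightarrow> nat \<Rightarrow> nat \<Rightarrow> bool" where
  "gE k u v \<longleftrightarrow> u \<noteq> v \<and> ((u < 3*k \<and> v < 3*k \<and> u div 3 = v div 3)
      \<or> (u = 3*k \<and> v < 3*k \<and> v mod 3 \<noteq> 0) \<or> (v = 3*k \<and> u < 3*k \<and> u mod 3 \<noteq> 0))"

lemma gE_simple: "simple_graph {..<n} (gE k)"
  unfolding simple_graph_def gE_def by auto

lemma gE_low: "v < 3*k \<Longrightarrow> u < 3*k \<Longrightarrow> gE k u v = (u \<noteq> v \<and> u div 3 = v div 3)"
  by (simp add: gE_def)

lemma tri_set:
  assumes "j < k" "3*j \<le> a" "a < 3*j+3"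
  shows "{u\<in>{..<a+1}. u \<noteq> a \<and> \<not> gE k u a \<and> \<not> gE k a u} = {..<3*j}"
proof -
  have ad: "a div 3 = j" using assms by (simp add: div3_eq)
  have "u \<in> {u\<in>{..<a+1}. u \<noteq> a \<and> \<not> gE k u a \<and> \<not> gE k a u} \<longleftrightarrow> u < 3*j" for u
  proof (cases "u < a + 1")
    case True
    hence "u < 3*k" "a < 3*k" using assms by auto
    hence "gE k u a = (u \<noteq> a \<and> u div 3 = j)" "gE k a u = (u \<noteq> a \<and> u div 3 = j)"
      using gE_low ad by auto
    moreover have "(u div 3 = j) = (3*j \<le> u \<and> u < 3*j + 3)" by (rule div3_eq)
    ultimately show ?thesis using True assms by auto
  next
    case False thus ?thesis using assms by auto
  qed
  thus ?thesis by blast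
qed

lemma tri: "j \<le> k \<Longrightarrow> FF (gE k) {..<3*j} z = (1 + 3*z) ^ j"
proof (induction j)
  case 0 thus ?case using FF_zero[of "{}::nat set" "gE k"]
    by (simp add: FF_def indep_set_def)
next
  case (Suc j)
  have jk: "j < k" using Suc by simp
  have s1: "{u\<in>{..<3*j+3}. u \<noteq> 3*j+2 \<and> \<not> gE k u (3*j+2) \<and> \<not> gE k (3*j+2) u} = {..<3*j}"
  proof -
    have e: "3*j+3 = 3*j+2+1" by simp
    show ?thesis unfolding e by (rule tri_set[OF jk]) auto
  qed
  have s2: "{u\<in>{..<3*j+2}. u \<noteq> 3*j+1 \<and> \<not> gE k u (3*j+1) \<and> \<not> gE k (3*j+1) u} = {..<3*j}"
  proof -
    have e: "3*j+2 = 3*j+1+1" by simp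
    show ?thesis unfolding e by (rule tri_set[OF jk]) auto
  qed
  have s3: "{u\<in>{..<3*j+1}. u \<noteq> 3*j \<and> \<not> gE k u (3*j) \<and> \<not> gE k (3*j) u} = {..<3*j}"
    by (rule tri_set[OF jk]) auto
  have r1: "FF (gE k) {..<3*j+3} z = FF (gE k) {..<3*j+2} z + z * FF (gE k) {..<3*j} z"
  proof -
    have d: "{..<3*j+3} - {3*j+2} = {..<3*j+2}" by auto
    have "FF (gE k) {..<3*j+3} z = FF (gE k) ({..<3*j+3} - {3*j+2}) z + z * FF (gE k) {u\<in>{..<3*j+3}. u \<noteq> 3*j+2 \<and> \<not> gE k u (3*j+2) \<and> \<not> gE k (3*j+2) u} z"
      by (rule FF_rec) (auto simp: gE_def)
    thus ?thesis unfolding d s1 .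
  qed
  have r2: "FF (gE k) {..<3*j+2} z = FF (gE k) {..<3*j+1} z + z * FF (gE k) {..<3*j} z"
  proof -
    have d: "{..<3*j+2} - {3*j+1} = {..<3*j+1}" by auto
    have "FF (gE k) {..<3*j+2} z = FF (gE k) ({..<3*j+2} - {3*j+1}) z + z * FF (gE k) {u\<in>{..<3*j+2}. u \<noteq> 3*j+1 \<and> \<not> gE k u (3*j+1) \<and> \<not> gE k (3*j+1) u} z"
      by (rule FF_rec) (auto simp: gE_def)
    thus ?thesis unfolding d s2 .
  qed
  have r3: "FF (gE k) {..<3*j+1} z = FF (gE k) {..<3*j} z + z * FF (gE k) {..<3*j} z"
  proof -
    have d: "{..<3*j+1} - {3*j} = {..<3*j}" by auto
    have "FF (gE k) {..<3*j+1} z = FF (gE k) ({..<3*j+1} - {3*j}) z + z * FF (gE k) {u\<in>{..<3*j+1}. u \<noteq> 3*j \<and> \<not> gE k u (3*j) \<and> \<not> gE k (3*j) u} z"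
      by (rule FF_rec) (auto simp: gE_def)
    thus ?thesis unfolding d s3 .
  qed
  have "3 * Suc j = 3*j+3" by simp
  then show ?case using r1 r2 r3 Suc by (simp add: algebra_simps)
qed

lemma main_poly: "FF (gE k) {..<3*k+1} z = (1 + 3*z) ^ k + z * (1 + z) ^ k"
proof -
  let ?W = "{u\<in>{..<3*k+1}. u \<noteq> 3*k \<and> \<not> gE k u (3*k) \<and> \<not> gE k (3*k) u}"
  have W: "?W = (\<lambda>i. 3*i) ` {..<k}"
  proof (rule set_eqI, rule iffI)
    fix u assume "u \<in> ?W"
    hence "u < 3*k" "u mod 3 = 0" unfolding gE_def by auto
    hence "u = 3 * (u div 3)" "u div 3 < k" by auto
    thus "u \<in> (\<lambda>i. 3*i) ` {..<k}" by blast
  qed (auto simp: gE_def)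
  have cW: "card ?W = k" unfolding W by (subst card_image) (auto simp: inj_on_def)
  have nW: "\<forall>u\<in>?W. \<forall>v\<in>?W. \<not> gE k u v" unfolding W gE_def by auto
  have d: "{..<3*k+1} - {3*k} = {..<3*k}" by auto
  have "FF (gE k) {..<3*k+1} z = FF (gE k) ({..<3*k+1} - {3*k}) z + z * FF (gE k) ?W z"
    by (rule FF_rec) (auto simp: gE_def)
  hence "FF (gE k) {..<3*k+1} z = FF (gE k) {..<3*k} z + z * FF (gE k) ?W z" unfolding d .
  moreover have "FF (gE k) ?W z = (1+z) ^ card ?W"
    by (rule FF_noedge[OF _ nW]) (rule finite_subset[of _ "{..<3*k+1}"], auto)
  moreover have "FF (gE k) {..<3*k} z = (1 + 3*z) ^ k" by (rule tri) simp
  ultimately show "FF (gE k) {..<3*k+1} z = (1 + 3*z) ^ k + z * (1 + z) ^ k" unfolding cW by simp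
qed

lemma extend: "3*k+1 \<le> m \<Longrightarrow> FF (gE k) {..<3*k+1} z = 0 \<Longrightarrow> FF (gE k) {..<m} z = 0"
proof (induction m rule: dec_induct)
  case base thus ?case by simp
next
  case (step m)
  have s: "{u\<in>{..<Suc m}. u \<noteq> m \<and> \<not> gE k u m \<and> \<not> gE k m u} = {..<m}"
  proof -
    have "\<not> gE k u m \<and> \<not> gE k m u" if "u < m" for u using step(1) that unfolding gE_def by auto
    thus ?thesis by auto
  qed
  have "FF (gE k) {..<Suc m} z = FF (gE k) {..<m} z + z * FF (gE k) {..<m} z"
  proof -
    have d: "{..<Suc m} - {m} = {..<m}" by auto
    have "FF (gE k) {..<Suc m} z = FF (gE k) ({..<Suc m} - {m}) z + z * FF (gE k) {u\<in>{..<Suc m}. u \<noteq> m \<and> \<not> gE k u m \<and> \<not> gE k m u} z"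
      by (rule FF_rec) (auto simp: gE_def)
    thus ?thesis unfolding d s .
  qed
  thus ?case using step by simp
qed


lemma real_root: "\<exists>t::real. 3^k \<le> t \<and> (3*t-1)^k - t*(t-1)^k = 0"
proof -
  define a :: real where "a = 3^k"
  define T :: real where "T = a + k"
  define h where "h = (\<lambda>t::real. (3*t-1)^k - t*(t-1)^k)"
  have a1: "1 \<le> a" unfolding a_def by simp
  have T1: "1 \<le> T" "a \<le> T" using a1 unfolding T_def by auto
  have "(3*a-3)^k \<le> (3*a-1)^k" by (rule power_mono) (use a1 in auto)
  moreover have "(3*a-3)^k = a*(a-1)^k"
    unfolding a_def by (simp add: power_mult_distrib[symmetric] algebra_simps)
  ultimately have ha: "0 \<le> h a" unfolding h_def by simp
  have B: "1 + of_nat k * (- 1/T) \<le> (1 + (-1/T))^k"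
    by (rule Bernoulli_inequality) (use T1 in simp)
  have "T^k * (T - k) = T^(k+1) * (1 + of_nat k * (- 1/T))"
    using T1 by (simp add: field_simps)
  also have "\<dots> \<le> T^(k+1) * (1 + (-1/T))^k"
    by (rule mult_left_mono[OF B]) (use T1 in simp)
  also have "\<dots> = T * (T * (1 + (-1/T)))^k" by (simp add: power_mult_distrib)
  also have "T * (1 + (-1/T)) = T - 1" using T1 by (simp add: field_simps)
  finally have c3: "T^k * a \<le> T * (T-1)^k" unfolding T_def by simp
  have c1: "(3*T-1)^k \<le> (3*T)^k" by (rule power_mono) (use T1 in auto)
  have c2: "(3*T)^k = T^k * a" unfolding a_def by (simp add: power_mult_distrib)
  have hT: "h T \<le> 0" unfolding h_def using c1 c2 c3 by linarith
  have "\<exists>x. a \<le> x \<and> x \<le> T \<and> h x = 0"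
    by (rule IVT2[OF hT ha T1(2)]) (auto simp: h_def intro!: continuous_intros)
  thus ?thesis unfolding h_def a_def by auto
qed


lemma X_finite: "finite {norm z | z E. simple_graph {..<n::nat} E \<and> poly (indep_poly {..<n} E) z = 0}"
proof -
  let ?P = "GG ` Pow (Pow {..<n::nat})"
  have "{norm z | z E. simple_graph {..<n::nat} E \<and> poly (indep_poly {..<n} E) z = 0}
        \<subseteq> norm ` (\<Union>p\<in>?P - {0}. {z. poly p z = 0})"
  proof
    fix x assume "x \<in> {norm z | z E. simple_graph {..<n::nat} E \<and> poly (indep_poly {..<n} E) z = 0}"
    then obtain z E where x: "x = norm z" and r: "poly (indep_poly {..<n} E) z = 0" by blast
    have "indep_poly {..<n} E \<in> ?P" unfolding indep_poly_GG
      by (rule imageI) (auto simp: indep_set_def)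
    moreover have "indep_poly {..<n} E \<noteq> 0"
    proof
      assume "indep_poly {..<n} E = 0"
      hence "poly (indep_poly {..<n} E) 0 = 0" by simp
      thus False using poly_indep[of "{..<n}" E 0] FF_zero[of "{..<n}" E] by simp
    qed
    ultimately show "x \<in> norm ` (\<Union>p\<in>?P - {0}. {z. poly p z = 0})" using x r by blast
  qed
  moreover have "finite (norm ` (\<Union>p\<in>?P - {0}. {z. poly p z = 0}))"
    by (intro finite_imageI finite_UN_I) (auto intro: poly_roots_finite)
  ultimately show ?thesis by (rule finite_subset)
qed

theorem proposition2:
  fixes n :: nat
  assumes "n \<ge> 1"
  shows "max_indep_root_modulus n \<ge>
           (if n mod 3 = 0 then 3 powr ((real n - 3) / 3)
            else if n mod 3 = 1 then 3 powr ((real n - 1) / 3)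
            else 3 powr ((real n - 2) / 3))"
proof -
  define k where "k = (n - 1) div 3"
  have kn: "3*k+1 \<le> n" using assms unfolding k_def by linarith
  have bound: "(if n mod 3 = 0 then 3 powr ((real n - 3) / 3)
            else if n mod 3 = 1 then 3 powr ((real n - 1) / 3)
            else 3 powr ((real n - 2) / 3)) = (3::real) ^ k"
  proof -
    define r where "r = (n - 1) mod 3"
    have nr: "n = 3*k + 1 + r" "r < 3" unfolding k_def r_def using assms by auto
    have "r = 0 \<or> r = 1 \<or> r = 2" using nr by auto
    hence "(n mod 3 = 0 \<and> real n = 3 * real k + 3) \<or> (n mod 3 = 1 \<and> real n = 3 * real k + 1)
        \<or> (n mod 3 = 2 \<and> real n = 3 * real k + 2)"
    proof (elim disjE)
      assume "r = 0" thus ?thesis using nr(1) by simp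
    next
      assume "r = 1" hence nn: "n = 3*k + 2" using nr(1) by simp
      have "n mod 3 = 2" unfolding nn by presburger
      moreover have "real n = 3 * real k + 2" unfolding nn by simp
      ultimately show ?thesis by simp
    next
      assume "r = 2" hence nn: "n = 3*k + 3" using nr(1) by simp
      have "n mod 3 = 0" unfolding nn by presburger
      moreover have "real n = 3 * real k + 3" unfolding nn by simp
      ultimately show ?thesis by simp
    qed
    hence "(if n mod 3 = 0 then 3 powr ((real n - 3) / 3)
            else if n mod 3 = 1 then 3 powr ((real n - 1) / 3)
            else 3 powr ((real n - 2) / 3)) = 3 powr (real k)" by auto
    thus ?thesis by (simp add: powr_realpow)
  qed
  obtain t :: real where t: "3^k \<le> t" "(3*t-1)^k - t*(t-1)^k = 0" using real_root by blast
  define z :: complex where "z = - of_real t"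
  have e1: "1 + 3*z = (-1) * of_real (3*t-1)" unfolding z_def by simp
  have e2: "1 + z = (-1) * of_real (t-1)" unfolding z_def by simp
  have "(1 + 3*z)^k + z * (1+z)^k = (-1)^k * (of_real (3*t-1))^k + z * ((-1)^k * (of_real (t-1))^k)"
    by (simp only: e1 e2 power_mult_distrib)
  also have "\<dots> = (-1)^k * (of_real ((3*t-1)^k) - of_real t * of_real ((t-1)^k))"
    unfolding z_def of_real_power by algebra
  also have "\<dots> = (-1)^k * of_real ((3*t-1)^k - t*(t-1)^k)" by simp
  also have "\<dots> = 0" using t by simp
  finally have "FF (gE k) {..<3*k+1} z = 0" using main_poly by simp
  hence "FF (gE k) {..<n} z = 0" using extend[OF kn] by blast
  hence root: "poly (indep_poly {..<n} (gE k)) z = 0" using poly_indep[of "{..<n}" "gE k" z] by simp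
  have "(0::real) \<le> 3^k" by simp
  hence "0 \<le> t" using t(1) by linarith
  hence nz: "norm z = t" unfolding z_def by simp
  have "norm z \<in> {norm z | z E. simple_graph {..<n::nat} E \<and> poly (indep_poly {..<n} E) z = 0}"
    using root gE_simple by blast
  hence "norm z \<le> max_indep_root_modulus n"
    unfolding max_indep_root_modulus_def by (rule Max_ge[OF X_finite])
  thus ?thesis unfolding bound using nz t by simp
qed

end
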